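(* Let $q$ be a prime power, $n, m \in \mathbb{N}$. For every integer $0 \le d < mq^2$, $$\mathrm{rank}_{\mathbb{F}_q} \mathrm{EVAL}^m(\mathcal{V}_{\mathrm{full}}, W_{d,n}) = |W_{d,n}| = \binom{d+n}{d}.$$
   Context: Work over the field $\mathbb{F} = \mathbb{F}_q(t_1,t_2)$ of rational functions. For $f \in \mathbb{F}[x_1,\dots,x_n]$ and $\mathbf{i} \in \mathbb{Z}_{\ge 0}^n$, the $\mathbf{i}$-th Hasse derivative $f^{(\mathbf{i})}$ is defined by the expansion $f(x+z) = \sum_{\mathbf{j}} f^{(\mathbf{j})}(x) z^{\mathbf{j}}$; the weight of $\mathbf{j}$ is $\mathrm{wt}(\mathbf{j}) = \sum_i j_i$. $W_{d,n}$ is the set of monomials in $x_1,\dots,x_n$ of degree at most $d$. For $S \subset \mathbb{F}^n$ and a set of monomials $W$, $\mathrm{EVAL}^m(S,W)$ is the matrix with columns indexed by $f \in W$, rows indexed by pairs $(x,\mathbf{j}) \in S \times \mathbb{Z}_{\ge 0}^n$ with $\mathrm{wt}(\mathbf{j}) < m$, and $((x,\mathbf{j}),f)$ entry $f^{(\mathbf{j})}(x)$. For a matrix over an extension field of $\mathbb{F}_q$, $\mathrm{rank}_{\mathbb{F}_q}$ is the largest size of a set of columns no nonzero $\mathbb{F}_q$-linear combination of which is zero. $\mathcal{V} = \{u t_1 + v t_2 : u, v \in \mathbb{F}_q^n\}$ and $\mathcal{V}_{\mathrm{full}} = \{u t_1 + v t_2 \in \mathcal{V} : u, v \text{ linearly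 independent over } \mathbb{F}_q\}$. *)

theory Defs
  imports "HOL-Library.Cardinality" "HOL-Computational_Algebra.Polynomial" "HOL-Computational_Algebra.Fraction_Field"
begin

text \<open>The field F = F_q(t1,t2), realised as the fraction field of F_q[t1][t2].
  The base field F_q is a finite field type 'a (q = CARD('a), automatically a prime power).\<close>
type_synonym 'a ratfun2 = "'a poly poly fract"

definition emb :: "'a::field \<Rightarrow> 'a ratfun2" where
  "emb c = Fract [:[:c:]:] 1"

definition t1 :: "'a::field ratfun2" where
  "t1 = Fract [:[:0, 1:]:] 1"

definition t2 :: "'a::field ratfun2" where
  "t2 = Fract [:0, 1:] 1"

definition W :: "nat \<Rightarrow> nat \<Rightarrow> (nat \<Rightarrow> nat) set" where
  "W d n = {a. (\<forall>i\<ge>n. a i = 0) \<and> (\<Sum>i<n. a i) \<le> d}"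

text \<open>Hasse derivative of the monomial x^a, index j, evaluated at point x:
  prod_i binom(a_i, j_i) x_i^(a_i - j_i) (binomials read in the field).\<close>
definition hasse_mono :: "nat \<Rightarrow> (nat \<Rightarrow> nat) \<Rightarrow> (nat \<Rightarrow> nat) \<Rightarrow> (nat \<Rightarrow> 'b::comm_ring_1) \<Rightarrow> 'b" where
  "hasse_mono n a j x = (\<Prod>i<n. of_nat (a i choose j i) * x i ^ (a i - j i))"

definition lin_indep2 :: "nat \<Rightarrow> (nat \<Rightarrow> 'a::field) \<Rightarrow> (nat \<Rightarrow> 'a) \<Rightarrow> bool" where
  "lin_indep2 n u v \<longleftrightarrow> (\<forall>a b. (\<forall>i<n. a * u i + b * v i = 0) \<longrightarrow> a = 0 \<and> b = 0)"

definition V_full :: "nat \<Rightarrow> (nat \<Rightarrow> 'a::field ratfun2) set" where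
  "V_full n = {x. \<exists>u v. (\<forall>i\<ge>n. u i = 0 \<and> v i = 0) \<and> lin_indep2 n u v \<and>
                       x = (\<lambda>i. emb (u i) * t1 + emb (v i) * t2)}"

definition EVAL_rows :: "nat \<Rightarrow> nat \<Rightarrow> (nat \<Rightarrow> 'b) set \<Rightarrow> ((nat \<Rightarrow> 'b) \<times> (nat \<Rightarrow> nat)) set" where
  "EVAL_rows n m S = {(x, j). x \<in> S \<and> (\<forall>i\<ge>n. j i = 0) \<and> (\<Sum>i<n. j i) < m}"

text \<open>Entries of EVAL: ((x,j), f) entry is f^(j)(x), columns indexed by monomials (exponent vectors).\<close>
definition EVAL :: "nat \<Rightarrow> ((nat \<Rightarrow> 'b::comm_ring_1) \<times> (nat \<Rightarrow> nat)) \<Rightarrow> (nat \<Rightarrow> nat) \<Rightarrow> 'b" where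
  "EVAL n r a = hasse_mono n a (snd r) (fst r)"

definition Fq_indep :: "('r \<Rightarrow> 'c \<Rightarrow> 'a::field ratfun2) \<Rightarrow> 'r set \<Rightarrow> 'c set \<Rightarrow> bool" where
  "Fq_indep M R C \<longleftrightarrow> (\<forall>c :: 'c \<Rightarrow> 'a. (\<forall>r\<in>R. (\<Sum>k\<in>C. emb (c k) * M r k) = 0) \<longrightarrow> (\<forall>k\<in>C. c k = 0))"

definition rank_Fq :: "('r \<Rightarrow> 'c \<Rightarrow> 'a::field ratfun2) \<Rightarrow> 'r set \<Rightarrow> 'c set \<Rightarrow> nat" where
  "rank_Fq M R C = Max (card ` {D. D \<subseteq> C \<and> Fq_indep M R D})"

end

theory Submission imports Defs "HOL-Computational_Algebra.Polynomial_Factorial"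
begin

lemma W_0: "W d 0 = {\<lambda>_. 0}"
  unfolding W_def by auto

lemma W_Suc: "W d (Suc n) = (\<Union>k\<in>{..d}. (\<lambda>b. b(n:=k)) ` W (d-k) n)"
proof (intro equalityI subsetI)
  fix a assume a: "a \<in> W d (Suc n)"
  have s: "(\<Sum>i<Suc n. a i) = (\<Sum>i<n. a i) + a n" by simp
  let ?b = "a(n:=0)"
  have "(\<Sum>i<n. ?b i) = (\<Sum>i<n. a i)" by (intro sum.cong) auto
  then have "?b \<in> W (d - a n) n" using a s unfolding W_def by auto
  moreover have "a = ?b(n := a n)" by auto
  moreover have "a n \<le> d" using a s unfolding W_def by auto
  ultimately show "a \<in> (\<Union>k\<in>{..d}. (\<lambda>b. b(n:=k)) ` W (d-k) n)" by blast
next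
  fix a assume "a \<in> (\<Union>k\<in>{..d}. (\<lambda>b. b(n:=k)) ` W (d-k) n)"
  then obtain k b where k: "k \<le> d" and b: "b \<in> W (d-k) n" and ab: "a = b(n:=k)" by auto
  have "(\<Sum>i<n. a i) = (\<Sum>i<n. b i)" using ab by (intro sum.cong) auto
  then show "a \<in> W d (Suc n)" using k b ab unfolding W_def by auto
qed

lemma W_fin_card: "finite (W d n) \<and> card (W d n) = (d + n) choose d"
proof (induction n arbitrary: d)
  case 0
  then show ?case by (simp add: W_0)
next
  case (Suc n)
  have inj: "inj_on (\<lambda>b. b(n:=k)) (W e n)" for k e
    unfolding W_def inj_on_def by (auto simp: fun_eq_iff) (metis fun_upd_other order_refl)
  have disj: "\<forall>k\<in>{..d}. \<forall>k'\<in>{..d}. k \<noteq> k' \<longrightarrow> (\<lambda>b. b(n:=k)) ` W (d-k) n \<inter> (\<lambda>b. b(n:=k')) ` W (d-k') n = {}"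
    by (auto simp: fun_eq_iff) (metis fun_upd_same)
  have fin: "finite (W d (Suc n))" unfolding W_Suc using Suc by auto
  have "card (W d (Suc n)) = (\<Sum>k\<le>d. card ((\<lambda>b. b(n:=k)) ` W (d-k) n))"
    unfolding W_Suc using Suc by (intro card_UN_disjoint[OF _ _ disj]) auto
  also have "\<dots> = (\<Sum>k\<le>d. (d - k + n) choose (d - k))"
    using Suc inj by (simp add: card_image)
  also have "\<dots> = (\<Sum>k\<le>d. (n + k) choose k)"
    by (rule sum.reindex_bij_witness[where i="\<lambda>k. d - k" and j="\<lambda>k. d - k"]) (auto simp: add.commute)
  also have "\<dots> = (d + Suc n) choose d" by (subst sum_choose_lower) (simp add: add.commute)
  finally show ?case using fin by simp
qed

lemma pcompose_monom_gen: "pcompose (monom c e) q = smult c (q ^ e)"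
  by (induction e) (simp_all add: monom_0 monom_Suc pcompose_pCons)

lemma coeff_lin_pow: "coeff ([:b, 1:] ^ e) k = of_nat (e choose k) * (b::'a::comm_semiring_1) ^ (e - k)"
proof (cases "k \<le> e")
  case True then show ?thesis by (simp add: coeff_linear_poly_power)
next
  case False
  have "degree ([:b, 1:] ^ e) \<le> e"
    by (metis degree_linear_power le_refl)
  then show ?thesis using False by (simp add: coeff_eq_0 binomial_eq_0)
qed

lemma root_order:
  fixes g :: "'F::field poly"
  assumes fin: "finite A" and g: "g = (\<Sum>a\<in>A. monom (c a) (e a))"
    and z: "\<And>k. k < r \<Longrightarrow> (\<Sum>a\<in>A. c a * of_nat (e a choose k) * b ^ (e a - k)) = 0"
  shows "[:-b, 1:] ^ r dvd g"
proof -
  define h where "h = pcompose g [:b, 1:]"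
  have ch: "coeff h k = (\<Sum>a\<in>A. c a * of_nat (e a choose k) * b ^ (e a - k))" for k
    unfolding h_def g pcompose_sum coeff_sum pcompose_monom_gen
    by (simp add: coeff_lin_pow mult.assoc)
  have "monom 1 r dvd h" unfolding monom_1_dvd_iff' using z ch by simp
  then obtain h' where h': "h = monom 1 r * h'" by (auto elim: dvdE)
  have "pcompose [:b, 1:] [:-b, 1:] = [:0, 1:]" by (simp add: pcompose_pCons)
  then have "g = pcompose h [:-b, 1:]"
    unfolding h_def by (simp add: pcompose_assoc[symmetric])
  also have "\<dots> = [:-b, 1:] ^ r * pcompose h' [:-b, 1:]"
    unfolding h' pcompose_mult pcompose_monom_gen by simp
  finally show ?thesis by simp
qed

lemma sum_count_le: "finite S \<Longrightarrow> (\<Sum>b\<in>S. count M b) \<le> size M"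
proof (induction M)
  case empty then show ?case by simp
next
  case (add x M)
  have "(\<Sum>b\<in>S. count (add_mset x M) b) = (\<Sum>b\<in>S. count M b + (if b = x then 1 else 0))"
    by (intro sum.cong) auto
  also have "\<dots> = (\<Sum>b\<in>S. count M b) + (\<Sum>b\<in>S. (if b = x then 1 else 0))"
    by (simp add: sum.distrib)
  also have "(\<Sum>b\<in>S. (if b = x then 1 else 0::nat)) \<le> 1"
    using add.prems by (simp add: sum.delta)
  finally show ?case using add by simp
qed

lemma orders_le_degree:
  fixes g :: "'F::field poly"
  assumes "g \<noteq> 0" "finite S" "\<And>b. b \<in> S \<Longrightarrow> r \<le> order b g"
  shows "card S * r \<le> degree g"
proof -
  have "card S * r = (\<Sum>b\<in>S. r)" by simp
  also have "\<dots> \<le> (\<Sum>b\<in>S. count (proots g) b)"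
    using assms by (intro sum_mono) simp
  also have "\<dots> \<le> size (proots g)" using sum_count_le[OF assms(2)] .
  also have "\<dots> \<le> degree g" by (rule size_proots_le)
  finally show ?thesis .
qed

lemma hasse_cong:
  assumes "\<And>i. i < n \<Longrightarrow> a i = a' i" "\<And>i. i < n \<Longrightarrow> j i = j' i" "\<And>i. i < n \<Longrightarrow> x i = x' i"
  shows "hasse_mono n a j x = hasse_mono n a' j' x'"
  unfolding hasse_mono_def using assms by (intro prod.cong) auto

lemma hasse_Suc:
  "hasse_mono (Suc n) a j x = hasse_mono n a j x * (of_nat (a n choose j n) * x n ^ (a n - j n))"
  unfolding hasse_mono_def by simp

lemma W_finite: "finite (W d n)" using W_fin_card by blast

lemma W_slice: "t \<le> d \<Longrightarrow> {a\<in>W d (Suc n). a n = t} = (\<lambda>b. b(n:=t)) ` W (d-t) n"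
  unfolding W_Suc by auto

lemma W_upd_inj: "inj_on (\<lambda>b. b(n:=k)) (W e n)"
  unfolding W_def inj_on_def by (auto simp: fun_eq_iff) (metis fun_upd_other order_refl)

lemma SZ:
  fixes S :: "'F::field set" and C :: "(nat \<Rightarrow> nat) \<Rightarrow> 'F"
  assumes finS: "finite S"
  shows "d < m * card S \<Longrightarrow>
    (\<And>x j. (\<forall>i<n. x i \<in> S) \<Longrightarrow> (\<forall>i\<ge>n. j i = 0) \<Longrightarrow> (\<Sum>i<n. j i) < m \<Longrightarrow>
        (\<Sum>a\<in>W d n. C a * hasse_mono n a j x) = 0) \<Longrightarrow> a \<in> W d n \<Longrightarrow> C a = 0"
proof (induction n arbitrary: m d C a)
  case 0
  have m: "0 < m" using 0(1) by (cases m) auto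
  have "(\<Sum>a\<in>W d 0. C a * hasse_mono 0 a (\<lambda>_. 0) (\<lambda>_. 0)) = 0"
    using 0(2)[of "\<lambda>_. 0" "\<lambda>_. 0"] m by simp
  then show ?case using 0(3) by (simp add: W_0 hasse_mono_def)
next
  case (Suc n)
  show ?case
  proof (rule ccontr)
    assume Ca: "C a \<noteq> 0"
    define Z where "Z = {a\<in>W d (Suc n). C a \<noteq> 0}"
    have finZ: "finite Z" unfolding Z_def using W_finite by simp
    have aZ: "a \<in> Z" unfolding Z_def using Ca Suc.prems by simp
    define t where "t = Max ((\<lambda>a. a n) ` Z)"
    obtain a0 where a0Z: "a0 \<in> Z" and a0t: "a0 n = t"
    proof -
      have "t \<in> (\<lambda>a. a n) ` Z" unfolding t_def using finZ aZ by (intro Max_in) auto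
      then show ?thesis using that by auto
    qed
    have tmax: "a' n \<le> t" if "a' \<in> W d (Suc n)" "C a' \<noteq> 0" for a'
      unfolding t_def using that finZ by (intro Max_ge) (auto simp: Z_def)
    from a0Z obtain k b where k: "k \<le> d" and b: "b \<in> W (d-k) n" and a0b: "a0 = b(n:=k)"
      unfolding Z_def W_Suc by auto
    have kt: "k = t" using a0b a0t by simp
    have bn: "b n = 0" using b unfolding W_def by auto
    have td: "t \<le> d" using k kt by simp
    define s where "s = card S"
    have spos: "0 < s" using Suc.prems(1) unfolding s_def by (cases "card S") auto
    define m' where "m' = (d - t) div s + 1"
    have lt: "d - t < m' * s"
      unfolding m'_def using spos by (metis add.commute div_mult_mod_eq mod_less_divisor mult_Suc nat_add_left_cancel_less plus_1_eq_Suc)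
    define Ct where "Ct b = C (b(n:=t))" for b
    have Ctb: "Ct b \<noteq> 0" unfolding Ct_def using a0Z a0b kt by (simp add: Z_def)
    obtain x' j' where x': "\<forall>i<n. x' i \<in> S" and j': "\<forall>i\<ge>n. j' i = 0" and mu: "(\<Sum>i<n. j' i) < m'"
      and nz: "(\<Sum>b\<in>W (d-t) n. Ct b * hasse_mono n b j' x') \<noteq> 0"
      using Suc.IH[of "d - t" m' Ct b] lt b kt Ctb unfolding s_def by blast
    define \<mu> where "\<mu> = (\<Sum>i<n. j' i)"
    have mus: "\<mu> * s \<le> d - t"
    proof -
      have "\<mu> \<le> (d - t) div s" using mu unfolding \<mu>_def m'_def by simp
      then have "\<mu> * s \<le> (d - t) div s * s" by simp
      also have "\<dots> \<le> d - t" by simp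
      finally show ?thesis .
    qed
    have mum: "\<mu> < m"
    proof -
      have "\<mu> * s < m * s" using mus Suc.prems(1) td unfolding s_def by linarith
      then show ?thesis by simp
    qed
    define hm where "hm a = hasse_mono n a j' x'" for a
    define g where "g = (\<Sum>a\<in>W d (Suc n). monom (C a * hm a) (a n))"
    have cg: "coeff g k = (\<Sum>a\<in>W d (Suc n). if a n = k then C a * hm a else 0)" for k
      unfolding g_def coeff_sum by (intro sum.cong) (auto simp: coeff_monom)
    have "coeff g t = (\<Sum>a\<in>{a\<in>W d (Suc n). a n = t}. C a * hm a)"
      unfolding cg by (simp add: sum.inter_filter W_finite)
    also have "\<dots> = (\<Sum>b\<in>W (d-t) n. C (b(n:=t)) * hm (b(n:=t)))"
      unfolding W_slice[OF td] by (subst sum.reindex[OF W_upd_inj]) simp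
    also have "\<dots> = (\<Sum>b\<in>W (d-t) n. Ct b * hasse_mono n b j' x')"
      unfolding Ct_def hm_def by (intro sum.cong refl arg_cong2[where f="(*)"] hasse_cong) auto
    finally have gt: "coeff g t \<noteq> 0" using nz by simp
    then have gnz: "g \<noteq> 0" by auto
    have "coeff g k = 0" if "t < k" for k
      unfolding cg using tmax that by (intro sum.neutral) force
    then have dg: "degree g \<le> t" by (meson degree_le not_le)
    have ord: "m - \<mu> \<le> order b g" if bS: "b \<in> S" for b
    proof -
      have "[:-b, 1:] ^ (m - \<mu>) dvd g"
        unfolding g_def
      proof (rule root_order[OF W_finite refl])
        fix k assume kl: "k < m - \<mu>"
        have "(\<Sum>a\<in>W d (Suc n). C a * hm a * of_nat (a n choose k) * b ^ (a n - k))
            = (\<Sum>a\<in>W d (Suc n). C a * hasse_mono (Suc n) a (j'(n:=k)) (x'(n:=b)))"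
          unfolding hm_def hasse_Suc
          by (intro sum.cong refl) (simp add: mult.assoc hasse_cong[of n _ _ "j'(n:=k)" j' "x'(n:=b)" x'])
        also have "\<dots> = 0"
        proof (rule Suc.prems(2))
          show "\<forall>i<Suc n. (x'(n := b)) i \<in> S" using x' bS by (auto simp: less_Suc_eq)
          show "\<forall>i\<ge>Suc n. (j'(n := k)) i = 0" using j' by auto
          have "(\<Sum>i<Suc n. (j'(n := k)) i) = \<mu> + k"
            unfolding \<mu>_def by (simp add: sum.cong[of "{..<n}" _ "j'(n:=k)" j'])
          then show "(\<Sum>i<Suc n. (j'(n := k)) i) < m" using kl mum by simp
        qed
        finally show "(\<Sum>a\<in>W d (Suc n). C a * hm a * of_nat (a n choose k) * b ^ (a n - k)) = 0" .
      qed
      then show ?thesis using gnz order_divides by blast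
    qed
    have "s * (m - \<mu>) \<le> degree g"
      unfolding s_def using orders_le_degree[OF gnz finS ord] by simp
    then have "s * (m - \<mu>) \<le> t" using dg by simp
    then have "s * m \<le> t + s * \<mu>" using mum by (simp add: diff_mult_distrib2)
    then have "m * s \<le> d" using mus td by (simp add: mult.commute)
    then show False using Suc.prems(1) unfolding s_def by simp
  qed
qed

lemma hasse_hom:
  assumes m: "\<And>x y. f (x * y) = f x * f y" and o: "f 1 = 1" and nn: "\<And>k. f (of_nat k) = of_nat k"
  shows "f (hasse_mono n a j x) = hasse_mono n a j (\<lambda>i. f (x i))"
proof -
  have p: "f (y ^ k) = f y ^ k" for y k by (induction k) (simp_all add: o m)
  show ?thesis
    by (induction n) (simp_all add: hasse_Suc m p nn o, simp add: hasse_mono_def o)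
qed

lemma hasse_scale:
  "hasse_mono n a j (\<lambda>i. z i * X) = hasse_mono n a j z * (X::'b::comm_ring_1) ^ (\<Sum>i<n. a i - j i)"
  by (induction n) (simp_all add: hasse_Suc power_mult_distrib power_add mult_ac, simp add: hasse_mono_def)

definition T1 :: "'a::field poly poly" where "T1 = [:[:0, 1:]:]"
definition T2 :: "'a::field poly poly" where "T2 = [:0, 1:]"
definition K :: "'a::field \<Rightarrow> 'a poly poly" where "K c = [:[:c:]:]"

lemma emb_K: "emb c = to_fract (K c)" unfolding emb_def K_def to_fract_def ..
lemma t1_T: "t1 = to_fract T1" unfolding t1_def T1_def to_fract_def ..
lemma t2_T: "t2 = to_fract T2" unfolding t2_def T2_def to_fract_def ..

lemma K_mult: "K (x * y) = K x * K y" unfolding K_def by simp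
lemma K_add: "K (x + y) = K x + K y" unfolding K_def by simp
lemma K_1: "K 1 = 1" unfolding K_def by (simp add: one_pCons)
lemma K_of_nat: "K (of_nat k) = of_nat k" unfolding K_def by (simp add: of_nat_poly)
lemma to_fract_of_nat: "to_fract (of_nat k) = of_nat k" by (induction k) simp_all

lemma emb_mult: "emb (x * y) = emb x * emb y" unfolding emb_K K_mult by simp
lemma emb_add: "emb (x + y) = emb x + emb y" unfolding emb_K K_add by simp
lemma emb_1: "emb 1 = 1" unfolding emb_K K_1 by simp
lemma emb_0: "emb 0 = 0" unfolding emb_K K_def by simp
lemma emb_of_nat: "emb (of_nat k) = of_nat k" unfolding emb_K K_of_nat to_fract_of_nat ..
lemma emb_eq_0: "emb x = 0 \<longleftrightarrow> x = 0" unfolding emb_K K_def by simp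
lemma emb_sum: "emb (sum f B) = (\<Sum>b\<in>B. emb (f b))"
  by (induction B rule: infinite_finite_induct) (simp_all add: emb_0 emb_add)

lemma transfer_dep:
  fixes c :: "(nat \<Rightarrow> nat) \<Rightarrow> 'a::field" and w v :: "nat \<Rightarrow> 'a" and s' :: "'a ratfun2"
  assumes fin: "finite B"
    and H: "(\<Sum>a\<in>B. emb (c a) * hasse_mono n a j (\<lambda>i. emb (w i) * t1 + emb (v i) * t2)) = 0"
  shows "(\<Sum>a\<in>B. emb (c a) * hasse_mono n a j (\<lambda>i. emb (w i) * s')) = 0"
proof -
  define Y where "Y i = K (w i) * T1 + K (v i) * T2" for i
  define R where "R = (\<Sum>a\<in>B. K (c a) * hasse_mono n a j Y)"
  have "to_fract R = (\<Sum>a\<in>B. emb (c a) * hasse_mono n a j (\<lambda>i. emb (w i) * t1 + emb (v i) * t2))"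
    unfolding R_def to_fract_sum to_fract_mult
    by (subst hasse_hom[where f=to_fract]) (simp_all add: to_fract_of_nat Y_def emb_K t1_T t2_T)
  then have R0: "R = 0" using H by simp
  define e where "e a = (\<Sum>i<n. a i - j i)" for a
  define h where "h a = hasse_mono n a j w" for a
  have "poly R 0 = (\<Sum>a\<in>B. [:c a:] * hasse_mono n a j (\<lambda>i. [:w i:] * [:0, 1:]))"
    unfolding R_def poly_sum poly_mult
    by (subst hasse_hom[where f="\<lambda>p. poly p 0"]) (simp_all add: Y_def K_def T1_def T2_def)
  also have "\<dots> = (\<Sum>a\<in>B. monom (c a * h a) (e a))"
  proof (intro sum.cong refl)
    fix a
    have "hasse_mono n a j (\<lambda>i. [:w i:]) = [:h a:]"
      unfolding h_def by (subst hasse_hom[where f="\<lambda>x. [:x:]", symmetric]) (simp_all add: of_nat_poly one_pCons)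
    then show "[:c a:] * hasse_mono n a j (\<lambda>i. [:w i:] * [:0, 1:]) = monom (c a * h a) (e a)"
      unfolding hasse_scale e_def by (simp add: monom_altdef mult.commute)
  qed
  finally have r0: "(\<Sum>a\<in>B. monom (c a * h a) (e a)) = 0" using R0 by simp
  have ck: "(\<Sum>a\<in>{a\<in>B. e a = k}. c a * h a) = 0" for k
  proof -
    have "coeff (\<Sum>a\<in>B. monom (c a * h a) (e a)) k = (\<Sum>a\<in>{a\<in>B. e a = k}. c a * h a)"
      unfolding coeff_sum using fin by (simp add: coeff_monom sum.inter_filter[symmetric] eq_commute)
    then show ?thesis using r0 by simp
  qed
  have "(\<Sum>a\<in>B. emb (c a) * hasse_mono n a j (\<lambda>i. emb (w i) * s'))
      = (\<Sum>a\<in>B. emb (c a * h a) * s' ^ e a)"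
    unfolding hasse_scale h_def e_def
    by (intro sum.cong refl) (simp add: emb_mult hasse_hom[where f=emb, OF emb_mult emb_1 emb_of_nat] mult.assoc)
  also have "\<dots> = (\<Sum>k\<in>e ` B. \<Sum>a\<in>{a\<in>B. e a = k}. emb (c a * h a) * s' ^ e a)"
    using fin by (rule sum.image_gen)
  also have "\<dots> = (\<Sum>k\<in>e ` B. emb (\<Sum>a\<in>{a\<in>B. e a = k}. c a * h a) * s' ^ k)"
    unfolding emb_sum sum_distrib_right by (intro sum.cong refl) auto
  also have "\<dots> = 0" using ck by (simp add: emb_0)
  finally show ?thesis .
qed

lemma dep:
  fixes u v :: "nat \<Rightarrow> 'a::field"
  assumes n2: "n \<ge> 2" and nd: "\<not> lin_indep2 n u v"
  shows "\<exists>w' v' s'. (\<forall>i\<ge>n. w' i = 0 \<and> v' i = 0) \<and> lin_indep2 n w' v' \<and>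
           (\<forall>i<n. emb (u i) * t1 + emb (v i) * t2 = emb (w' i) * (s' :: 'a ratfun2))"
proof -
  obtain \<alpha> \<beta> where ab: "\<forall>i<n. \<alpha> * u i + \<beta> * v i = 0" and nz: "\<not> (\<alpha> = 0 \<and> \<beta> = 0)"
    using nd unfolding lin_indep2_def by blast
  obtain w p q where wpq: "\<forall>i<n. u i = p * w i \<and> v i = q * w i"
  proof (cases "\<beta> = 0")
    case True
    then have "\<alpha> \<noteq> 0" using nz by simp
    then have "\<forall>i<n. u i = 0" using ab True by simp
    then show ?thesis using that[of 0 v 1] by simp
  next
    case False
    have "\<forall>i<n. v i = (- \<alpha> / \<beta>) * u i"
    proof (intro allI impI)
      fix i assume "i < n"
      then have "\<beta> * v i = - \<alpha> * u i" using ab by (simp add: eq_neg_iff_add_eq_0 add.commute)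
      then show "v i = (- \<alpha> / \<beta>) * u i" using False by (simp add: field_simps)
    qed
    then show ?thesis using that[of 1 u "- \<alpha> / \<beta>"] by simp
  qed
  define s0 :: "'a ratfun2" where "s0 = emb p * t1 + emb q * t2"
  have xw: "\<forall>i<n. emb (u i) * t1 + emb (v i) * t2 = emb (w i) * s0"
    unfolding s0_def using wpq by (simp add: emb_mult algebra_simps)
  show ?thesis
  proof (cases "\<exists>k<n. w k \<noteq> 0")
    case True
    then obtain k where k: "k < n" "w k \<noteq> 0" by blast
    define l where "l = (if k = 0 then 1 else (0::nat))"
    have l: "l < n" "l \<noteq> k" unfolding l_def using n2 by auto
    define w' where "w' i = (if i < n then w i else 0)" for i
    define v' where "v' i = (if i = l then 1 else (0::'a))" for i :: nat
    have "lin_indep2 n w' v'"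
      unfolding lin_indep2_def
    proof (intro allI impI)
      fix a b assume h: "\<forall>i<n. a * w' i + b * v' i = 0"
      have "a * w k = 0" using h k l unfolding w'_def v'_def by (metis add.right_neutral mult_zero_right)
      then have a0: "a = 0" using k by simp
      have "b = 0" using h[rule_format, OF l(1)] a0 unfolding v'_def by simp
      then show "a = 0 \<and> b = 0" using a0 by simp
    qed
    moreover have "\<forall>i\<ge>n. w' i = 0 \<and> v' i = 0" unfolding w'_def v'_def using l by auto
    moreover have "\<forall>i<n. emb (u i) * t1 + emb (v i) * t2 = emb (w' i) * s0"
      using xw unfolding w'_def by simp
    ultimately show ?thesis by blast
  next
    case False
    define w' where "w' i = (if i = 0 then 1 else (0::'a))" for i :: nat
    define v' where "v' i = (if i = 1 then 1 else (0::'a))" for i :: nat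
    have "lin_indep2 n w' v'"
      unfolding lin_indep2_def
    proof (intro allI impI)
      fix a b assume h: "\<forall>i<n. a * w' i + b * v' i = 0"
      have "a = 0" using h[rule_format, of 0] n2 unfolding w'_def v'_def by simp
      moreover have "b = 0" using h[rule_format, of 1] n2 unfolding w'_def v'_def by simp
      ultimately show "a = 0 \<and> b = 0" by simp
    qed
    moreover have "\<forall>i\<ge>n. w' i = 0 \<and> v' i = 0" unfolding w'_def v'_def using n2 by auto
    moreover have "\<forall>i<n. emb (u i) * t1 + emb (v i) * t2 = emb (w' i) * (0::'a ratfun2)"
      using xw False by (simp add: emb_0)
    ultimately show ?thesis by blast
  qed
qed

definition grid :: "'a::field ratfun2 set" where
  "grid = (\<lambda>(a, b). emb a * t1 + emb b * t2) ` UNIV"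

lemma grid_pt: "emb a * t1 + emb b * t2 = to_fract [:[:0, a:], [:b:]:]"
  unfolding emb_K t1_T t2_T K_def T1_def T2_def to_fract_mult[symmetric] to_fract_add[symmetric]
  by simp

lemma grid_card: "finite (grid :: 'a::{finite,field} ratfun2 set) \<and> card (grid :: 'a ratfun2 set) = CARD('a) ^ 2"
proof -
  have inj: "inj (\<lambda>(a::'a, b). emb a * t1 + emb b * t2)"
    unfolding inj_def grid_pt by auto
  have "card (grid :: 'a ratfun2 set) = card (UNIV :: ('a \<times> 'a) set)"
    unfolding grid_def by (rule card_image[OF inj])
  then show ?thesis unfolding grid_def by (simp add: power2_eq_square)
qed

lemma indep_main:
  fixes n m d :: nat
  assumes n2: "n \<ge> 2"
    and dm: "d < m * CARD('a::{finite, field}) ^ 2"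
  shows "Fq_indep (EVAL n :: _ \<Rightarrow> _ \<Rightarrow> 'a ratfun2) (EVAL_rows n m (V_full n)) (W d n)"
  unfolding Fq_indep_def
proof (intro allI impI ballI)
  fix c :: "(nat \<Rightarrow> nat) \<Rightarrow> 'a" and k
  assume rows: "\<forall>r\<in>EVAL_rows n m (V_full n). (\<Sum>k\<in>W d n. emb (c k) * EVAL n r k) = 0"
  assume kW: "k \<in> W d n"
  have gc: "finite (grid :: 'a ratfun2 set)" "card (grid :: 'a ratfun2 set) = CARD('a) ^ 2"
    using grid_card by blast+
  have "emb (c k) = 0"
  proof (rule SZ[OF gc(1), where C="\<lambda>a. emb (c a)"])
    show "d < m * card (grid :: 'a ratfun2 set)" using dm gc by simp
    show "k \<in> W d n" by fact
    fix x :: "nat \<Rightarrow> 'a ratfun2" and j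
    assume xS: "\<forall>i<n. x i \<in> grid" and jz: "\<forall>i\<ge>n. j i = 0" and jm: "(\<Sum>i<n. j i) < m"
    have rowsj: "(\<Sum>a\<in>W d n. emb (c a) * hasse_mono n a j (\<lambda>i. emb (u i) * t1 + emb (v i) * t2)) = 0"
      if "(\<forall>i\<ge>n. u i = 0 \<and> v i = 0)" "lin_indep2 n u v" for u v
    proof -
      have "((\<lambda>i. emb (u i) * t1 + emb (v i) * t2), j) \<in> EVAL_rows n m (V_full n)"
        unfolding EVAL_rows_def V_full_def using that jz jm by blast
      from rows[rule_format, OF this] show ?thesis unfolding EVAL_def by simp
    qed
    have "\<forall>i. \<exists>p. i < n \<longrightarrow> x i = emb (fst p) * t1 + emb (snd p) * t2"
      using xS unfolding grid_def by fastforce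
    then obtain f where f: "\<And>i. i < n \<Longrightarrow> x i = emb (fst (f i)) * t1 + emb (snd (f i)) * t2"
      by metis
    define u where "u i = (if i < n then fst (f i) else 0)" for i
    define v where "v i = (if i < n then snd (f i) else 0)" for i
    have xuv: "\<forall>i<n. x i = emb (u i) * t1 + emb (v i) * t2" using f unfolding u_def v_def by simp
    have uv0: "\<forall>i\<ge>n. u i = 0 \<and> v i = 0" unfolding u_def v_def by simp
    show "(\<Sum>a\<in>W d n. emb (c a) * hasse_mono n a j x) = 0"
    proof (cases "lin_indep2 n u v")
      case True
      have "(\<Sum>a\<in>W d n. emb (c a) * hasse_mono n a j x)
          = (\<Sum>a\<in>W d n. emb (c a) * hasse_mono n a j (\<lambda>i. emb (u i) * t1 + emb (v i) * t2))"
        using xuv by (intro sum.cong refl arg_cong2[where f="(*)"] hasse_cong) auto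
      then show ?thesis using rowsj[OF uv0 True] by simp
    next
      case False
      obtain w' v' s' where a: "\<forall>i\<ge>n. w' i = 0 \<and> v' i = 0" and b: "lin_indep2 n w' v'"
        and c: "\<forall>i<n. emb (u i) * t1 + emb (v i) * t2 = emb (w' i) * (s' :: 'a ratfun2)"
        using dep[OF n2 False] by blast
      have "(\<Sum>a\<in>W d n. emb (c a) * hasse_mono n a j x)
          = (\<Sum>a\<in>W d n. emb (c a) * hasse_mono n a j (\<lambda>i. emb (w' i) * s'))"
        using xuv c by (intro sum.cong refl arg_cong2[where f="(*)"] hasse_cong) auto
      also have "\<dots> = 0" by (rule transfer_dep[OF W_finite rowsj[OF a b]])
      finally show ?thesis .
    qed
  qed
  then show "c k = 0" by (simp add: emb_eq_0)
qed

theorem mainTheorem15: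
  fixes n m d :: nat
  assumes "n \<ge> 2"
    and "d < m * CARD('a::{finite, field}) ^ 2"
  shows "rank_Fq (EVAL n :: _ \<Rightarrow> _ \<Rightarrow> 'a ratfun2) (EVAL_rows n m (V_full n)) (W d n) = card (W d n)
         \<and> card (W d n) = (d + n) choose d"
proof
  show "card (W d n) = (d + n) choose d" using W_fin_card by blast
  let ?M = "EVAL n :: _ \<Rightarrow> _ \<Rightarrow> 'a ratfun2"
  let ?X = "card ` {D. D \<subseteq> W d n \<and> Fq_indep ?M (EVAL_rows n m (V_full n)) D}"
  have fin: "finite ?X"
    by (rule finite_imageI, rule finite_subset[of _ "Pow (W d n)"]) (auto simp: W_finite)
  have "card (W d n) \<in> ?X" using indep_main[OF assms] by blast
  moreover have "\<forall>y\<in>?X. y \<le> card (W d n)" using W_finite by (auto intro: card_mono)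
  ultimately show "rank_Fq ?M (EVAL_rows n m (V_full n)) (W d n) = card (W d n)"
    unfolding rank_Fq_def using fin by (intro Max_eqI) auto
qed

end
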